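(* Let $A=(a_{ij})_{i,j=1}^n$ be the symmetric, entrywise nonnegative weighted adjacency matrix of an undirected graph on $n$ nodes, with degrees $d_i=\sum_j a_{ij}$ and total weight $m=\frac12\sum_{ij}a_{ij}>0$. Let $r\ge 1$ and $1\le k\le r$ be integers, and let $V=[v_1,\dots,v_n]$ with each $v_j\in\mathbb{R}^r$. Fix an index $i$ and the vectors $v_j$, $j\neq i$, and consider the subproblem $$\text{maximize}_{v_i}\; Q(v_i)\quad\text{s.t.}\quad v_i\in\mathbb{R}_+^r,\ \|v_i\|=1,\ \operatorname{card}(v_i)\le k,$$ where $Q(V)=\frac{1}{2m}\sum_{i,j}\left[a_{ij}-\frac{d_id_j}{2m}\right]v_i^Tv_j$ and $Q(v_i)$ denotes $Q$ as a function of $v_i$ alone with all other $v_j$ fixed. Let $q=\nabla Q(v_i):=\frac{1}{2m}\sum_{j\neq i}\left(a_{ij}-\frac{d_id_j}{2m}\right)v_j$. Then an optimal solution of the subproblem is $v_i=g/\|g\|$, where $$g=\begin{cases} e(t)\ \text{for a coordinate } t \text{ maximizing } q_t, & \text{if } q\le 0 \text{ (entrywise)},\\ \operatorname{top}_k^+(q), & \text{otherwise.}\end{cases}$$ (In the case $q\le 0$, if several $t$ attain the maximum of $q_t$, one chooses among them the $t$ with maximum $(v_i)_t$ for the previous value of $v_i$.)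
   Context: $\|\cdot\|$ is the Euclidean norm; $\operatorname{card}(v)$ is the number of nonzero entries of $v$; $e(t)$ is the standard basis vector of coordinate $t$ in $\mathbb{R}^r$. For $q\in\mathbb{R}^r$, $\operatorname{top}_k^+(q)$ is the vector of the same shape that keeps the $k$ largest coordinates of $q$ when they are nonnegative and sets all other coordinates (including negative ones among the top $k$) to zero; e.g. $\operatorname{top}_2^+((-1,3))=(0,3)$ and $\operatorname{top}_1^+((-1,-2))=(0,0)$. Note that the term of $Q$ involving $v_i^Tv_i$ is constant on the feasible set since $\|v_i\|=1$. *)

theory Defs
  imports "HOL-Analysis.Analysis"
begin

definition degree :: "('n::finite \<Rightarrow> 'n \<Rightarrow> real) \<Rightarrow> 'n \<Rightarrow> real" where
  "degree A i = (\<Sum>j\<in>UNIV. A i j)"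

definition total_weight :: "('n::finite \<Rightarrow> 'n \<Rightarrow> real) \<Rightarrow> real" where
  "total_weight A = (\<Sum>i\<in>UNIV. \<Sum>j\<in>UNIV. A i j) / 2"

definition modularity ::
  "('n::finite \<Rightarrow> 'n \<Rightarrow> real) \<Rightarrow> ('n \<Rightarrow> real^'r) \<Rightarrow> real" where
  "modularity A V =
     (1 / (2 * total_weight A)) *
     (\<Sum>i\<in>UNIV. \<Sum>j\<in>UNIV.
        (A i j - degree A i * degree A j / (2 * total_weight A)) * (V i \<bullet> V j))"

definition grad_Q ::
  "('n::finite \<Rightarrow> 'n \<Rightarrow> real) \<Rightarrow> ('n \<Rightarrow> real^'r) \<Rightarrow> 'n \<Rightarrow> real^'r" where
  "grad_Q A V i =
     (1 / (2 * total_weight A)) *\<^sub>R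
     (\<Sum>j\<in>UNIV - {i}.
        (A i j - degree A i * degree A j / (2 * total_weight A)) *\<^sub>R V j)"

definition cardv :: "real^'r::finite \<Rightarrow> nat" where
  "cardv v = card {t. v $ t \<noteq> 0}"

definition ebasis :: "'r::finite \<Rightarrow> real^'r" where
  "ebasis t = (\<chi> s. if s = t then 1 else 0)"

definition feasible :: "nat \<Rightarrow> real^'r::finite \<Rightarrow> bool" where
  "feasible k v \<longleftrightarrow> (\<forall>t. 0 \<le> v $ t) \<and> norm v = 1 \<and> cardv v \<le> k"

definition is_topk_plus :: "nat \<Rightarrow> real^'r::finite \<Rightarrow> real^'r \<Rightarrow> bool" where
  "is_topk_plus k q g \<longleftrightarrow>
     (\<exists>S. card S = k \<and> (\<forall>s\<in>S. \<forall>t. t \<notin> S \<longrightarrow> q $ t \<le> q $ s) \<and>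
          g = (\<chi> t. if t \<in> S \<and> 0 \<le> q $ t then q $ t else 0))"

end

theory Submission
  imports Defs
begin

lemma modularity_decomp:
  fixes A :: "'n::finite \<Rightarrow> 'n \<Rightarrow> real" and V :: "'n \<Rightarrow> real^'r::finite"
  assumes symm: "\<And>a b. A a b = A b a"
  shows "modularity A (V(i := w)) = modularity A (V(i := 0)) + 2 * (grad_Q A V i \<bullet> w)
     + (1 / (2 * total_weight A)) * (A i i - degree A i * degree A i / (2 * total_weight A)) * (w \<bullet> w)"
proof -
  define m2 where "m2 = 2 * total_weight A"
  define c where "c j l = A j l - degree A j * degree A l / m2" for j l
  have csym: "c j l = c l j" for j l unfolding c_def using symm by (simp add: mult.commute)
  define R where "R = UNIV - {i}"
  have U: "(UNIV::'n set) = insert i R" "i \<notin> R" "finite R" unfolding R_def by auto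
  have M: "modularity A W = (1/m2) * (\<Sum>j\<in>UNIV. \<Sum>l\<in>UNIV. c j l * (W j \<bullet> W l))" for W
    unfolding modularity_def m2_def c_def by simp
  have S: "(\<Sum>j\<in>UNIV. \<Sum>l\<in>UNIV. c j l * ((V(i:=x)) j \<bullet> (V(i:=x)) l)) =
     c i i * (x \<bullet> x) + 2 * (\<Sum>l\<in>R. c i l * (x \<bullet> V l)) + (\<Sum>j\<in>R. \<Sum>l\<in>R. c j l * (V j \<bullet> V l))" for x
  proof -
    have a: "(\<Sum>j\<in>R. c j i * (V j \<bullet> x)) = (\<Sum>l\<in>R. c i l * (x \<bullet> V l))"
      by (simp add: csym inner_commute)
    have b: "(\<Sum>j\<in>R. \<Sum>l\<in>R. c j l * ((V(i:=x)) j \<bullet> (V(i:=x)) l)) = (\<Sum>j\<in>R. \<Sum>l\<in>R. c j l * (V j \<bullet> V l))"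
      using U(2) by (intro sum.cong refl) auto
    have b2: "(\<Sum>l\<in>R. c i l * ((V(i:=x)) i \<bullet> (V(i:=x)) l)) = (\<Sum>l\<in>R. c i l * (x \<bullet> V l))"
      using U(2) by (intro sum.cong refl) auto
    have b3: "(\<Sum>j\<in>R. c j i * ((V(i:=x)) j \<bullet> (V(i:=x)) i)) = (\<Sum>j\<in>R. c j i * (V j \<bullet> x))"
      using U(2) by (intro sum.cong refl) auto
    show ?thesis
      unfolding U(1) sum.insert[OF U(3) U(2)] sum.distrib b b2 b3 a
      by simp
  qed
  have G: "grad_Q A V i \<bullet> w = (1/m2) * (\<Sum>l\<in>R. c i l * (w \<bullet> V l))"
    unfolding grad_Q_def m2_def[symmetric] c_def[symmetric] R_def
    by (simp add: inner_sum_left inner_sum_right sum_divide_distrib inner_commute[of w])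
  show ?thesis
    unfolding M S G m2_def[symmetric] c_def[symmetric]
    by (simp add: algebra_simps)
qed

lemma sum_ge1:
  fixes w :: "real^'r::finite"
  assumes "\<And>t. 0 \<le> w $ t" "norm w = 1"
  shows "1 \<le> (\<Sum>s\<in>UNIV. w $ s)"
proof -
  have le: "w $ s * w $ s \<le> w $ s" for s
  proof -
    have "w $ s \<le> 1" using component_le_norm_cart[of w s] assms by simp
    then show ?thesis using assms(1)[of s] by (simp add: mult_left_le)
  qed
  have "1 = w \<bullet> w" using assms(2) by (metis norm_eq_1)
  also have "\<dots> = (\<Sum>s\<in>UNIV. w $ s * w $ s)" by (simp add: inner_vec_def)
  also have "\<dots> \<le> (\<Sum>s\<in>UNIV. w $ s)" by (intro sum_mono le)
  finally show ?thesis .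
qed

lemma topk_sum:
  fixes f :: "'a \<Rightarrow> real"
  assumes fin: "finite S" "finite T" and cardle: "card T \<le> card S"
    and top: "\<And>s t. s \<in> S \<Longrightarrow> t \<notin> S \<Longrightarrow> f t \<le> f s"
    and pos: "\<And>t. 0 \<le> f t"
  shows "sum f T \<le> sum f S"
proof -
  have c1: "card T = card (T \<inter> S) + card (T - S)"
    using fin by (metis Diff_Diff_Int Int_commute card_Diff_subset_Int card_mono inf_le1 le_add_diff_inverse finite_Diff
        card_Un_disjoint Diff_disjoint Int_Diff_Un Int_Diff_disjoint finite_Int)
  have c2: "card S = card (T \<inter> S) + card (S - T)"
    using fin by (metis Int_commute card_Un_disjoint Int_Diff_Un Int_Diff_disjoint finite_Int finite_Diff)
  have cd: "card (T - S) \<le> card (S - T)" using c1 c2 cardle by simp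
  have s1: "sum f T = sum f (T \<inter> S) + sum f (T - S)"
    using fin by (metis Int_Diff_Un Int_Diff_disjoint finite_Int finite_Diff sum.union_disjoint)
  have s2: "sum f S = sum f (T \<inter> S) + sum f (S - T)"
    using fin by (metis Int_commute Int_Diff_Un Int_Diff_disjoint finite_Int finite_Diff sum.union_disjoint)
  have "sum f (T - S) \<le> sum f (S - T)"
  proof (cases "S - T = {}")
    case True
    then have "card (T - S) = 0" using cd by (metis card.empty le_zero_eq)
    then have "T - S = {}" using fin by simp
    then show ?thesis using pos by (metis sum.empty sum_nonneg)
  next
    case False
    define a where "a = Min (f ` (S - T))"
    have fa: "finite (f ` (S - T))" "f ` (S - T) \<noteq> {}" using fin False by auto
    have "a \<ge> 0" unfolding a_def using fa pos by (simp add: Min_ge_iff)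
    have "sum f (T - S) \<le> of_nat (card (T - S)) * a"
      using sum_bounded_above[of "T - S" f a] top fa unfolding a_def
      by (simp add: Min_ge_iff)
    also have "\<dots> \<le> of_nat (card (S - T)) * a" using cd \<open>a \<ge> 0\<close> by (simp add: mult_right_mono)
    also have "\<dots> \<le> sum f (S - T)"
      using sum_bounded_below[of "S - T" a f] fa unfolding a_def by simp
    finally show ?thesis .
  qed
  then show ?thesis using s1 s2 by simp
qed

theorem proposition1:
  fixes A :: "'n::finite \<Rightarrow> 'n \<Rightarrow> real"
    and V :: "'n \<Rightarrow> real^'r::finite"
    and i :: 'n and k :: nat and g :: "real^'r"
  assumes symm: "\<And>a b. A a b = A b a"
    and nonneg: "\<And>a b. 0 \<le> A a b"
    and m_pos: "total_weight A > 0"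
    and k_ge: "1 \<le> k" and k_le: "k \<le> CARD('r)"
    and g_def: "if (\<forall>t. grad_Q A V i $ t \<le> 0)
                then (\<exists>t. (\<forall>s. grad_Q A V i $ s \<le> grad_Q A V i $ t) \<and> g = ebasis t)
                else is_topk_plus k (grad_Q A V i) g"
  shows "feasible k (g /\<^sub>R norm g) \<and>
         (\<forall>w. feasible k w \<longrightarrow>
              modularity A (V(i := w)) \<le> modularity A (V(i := g /\<^sub>R norm g)))"
proof -
  define q where "q = grad_Q A V i"
  define u where "u = g /\<^sub>R norm g"
  have main: "feasible k u \<and> (\<forall>w. feasible k w \<longrightarrow> q \<bullet> w \<le> q \<bullet> u)"
  proof (cases "\<forall>t. q $ t \<le> 0")
    case True
    then obtain t where t: "\<And>s. q $ s \<le> q $ t" and gt: "g = ebasis t"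
      using g_def unfolding q_def by auto
    have ax: "g = axis t 1" unfolding gt ebasis_def axis_def by simp
    have ug: "u = g" unfolding u_def ax by (simp add: norm_axis_1)
    have supp: "{s. g $ s \<noteq> 0} = {t}" unfolding ax axis_def by auto
    have feas: "feasible k u" unfolding feasible_def cardv_def ug supp
      using k_ge norm_axis_1[of t] unfolding ax by (simp add: axis_def)
    have qu: "q \<bullet> u = q $ t" unfolding ug ax by (simp add: inner_commute[of q] inner_axis')
    have "q \<bullet> w \<le> q $ t" if fw: "feasible k w" for w
    proof -
      have w0: "\<And>s. 0 \<le> w $ s" and w1: "norm w = 1" using fw unfolding feasible_def by auto
      have "q \<bullet> w = (\<Sum>s\<in>UNIV. q $ s * w $ s)" by (simp add: inner_vec_def)
      also have "\<dots> \<le> (\<Sum>s\<in>UNIV. q $ t * w $ s)"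
        by (intro sum_mono mult_right_mono t w0)
      also have "\<dots> = q $ t * (\<Sum>s\<in>UNIV. w $ s)" by (simp add: sum_distrib_left)
      also have "\<dots> \<le> q $ t * 1"
        using sum_ge1[OF w0 w1] True by (intro mult_left_mono_neg) auto
      finally show ?thesis by simp
    qed
    then show ?thesis using feas qu by auto
  next
    case False
    then obtain t0 where t0: "q $ t0 > 0" by (auto simp: not_le)
    have "is_topk_plus k q g" using False g_def unfolding q_def by presburger
    then obtain S where cS: "card S = k"
      and top: "\<And>s t. s \<in> S \<Longrightarrow> t \<notin> S \<Longrightarrow> q $ t \<le> q $ s"
      and gS: "g = (\<chi> t. if t \<in> S \<and> 0 \<le> q $ t then q $ t else 0)"
      unfolding is_topk_plus_def by blast
    have "S \<noteq> {}" using cS k_ge by auto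
    have "\<exists>s\<in>S. q $ s > 0"
    proof (cases "t0 \<in> S")
      case True then show ?thesis using t0 by auto
    next
      case False
      then obtain s where "s \<in> S" using \<open>S \<noteq> {}\<close> by auto
      then show ?thesis using top[OF \<open>s \<in> S\<close> False] t0 by (meson less_le_trans)
    qed
    then obtain s0 where s0: "s0 \<in> S" "q $ s0 > 0" by auto
    have "g $ s0 \<noteq> 0" using s0 unfolding gS by simp
    then have gnz: "g \<noteq> 0" by auto
    then have ng: "norm g > 0" by simp
    have g0: "0 \<le> g $ t" for t unfolding gS by simp
    have suppg: "{t. g $ t \<noteq> 0} \<subseteq> S" unfolding gS by auto
    have suppu: "{t. u $ t \<noteq> 0} = {t. g $ t \<noteq> 0}" unfolding u_def using ng by auto
    have "card {t. g $ t \<noteq> 0} \<le> k" using card_mono[OF _ suppg] cS by simp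
    then have feas: "feasible k u"
      unfolding feasible_def cardv_def suppu u_def using ng g0 by (simp add: norm_ge_zero)
    define f where "f t = (max (q $ t) 0)^2" for t
    have f0: "0 \<le> f t" for t unfolding f_def by simp
    have qg: "q \<bullet> g = g \<bullet> g" unfolding inner_vec_def gS by (intro sum.cong) auto
    have gg: "g \<bullet> g = sum f S"
    proof -
      have "g \<bullet> g = (\<Sum>t\<in>UNIV. if t \<in> S then f t else 0)"
        unfolding inner_vec_def gS f_def by (intro sum.cong) (auto simp: power2_eq_square max_def)
      also have "\<dots> = sum f S" by (simp add: sum.If_cases)
      finally show ?thesis .
    qed
    have qu: "q \<bullet> u = norm g"
      unfolding u_def using ng qg by (simp add: power2_norm_eq_inner[symmetric] power2_eq_square)
    have "q \<bullet> w \<le> norm g" if fw: "feasible k w" for w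
    proof -
      have w0: "\<And>s. 0 \<le> w $ s" and w1: "norm w = 1" and cw: "cardv w \<le> k"
        using fw unfolding feasible_def by auto
      define T where "T = {t. w $ t \<noteq> 0}"
      define p :: "real^'r" where "p = (\<chi> t. if t \<in> T then max (q $ t) 0 else 0)"
      have "q \<bullet> w = (\<Sum>s\<in>UNIV. q $ s * w $ s)" by (simp add: inner_vec_def)
      also have "\<dots> \<le> (\<Sum>s\<in>UNIV. p $ s * w $ s)"
      proof (intro sum_mono)
        fix s
        show "q $ s * w $ s \<le> p $ s * w $ s"
        proof (cases "s \<in> T")
          case True then show ?thesis unfolding p_def using w0[of s] by (simp add: mult_right_mono)
        next
          case False then show ?thesis unfolding T_def by simp
        qed
      qed
      also have "\<dots> = p \<bullet> w" by (simp add: inner_vec_def)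
      also have "\<dots> \<le> norm p * norm w" by (rule norm_cauchy_schwarz)
      also have "\<dots> = norm p" using w1 by simp
      also have "\<dots> \<le> norm g"
      proof -
        have pp: "p \<bullet> p = sum f T"
        proof -
          have "p \<bullet> p = (\<Sum>t\<in>UNIV. if t \<in> T then f t else 0)"
            unfolding inner_vec_def p_def f_def by (intro sum.cong) (auto simp: power2_eq_square)
          also have "\<dots> = sum f T" by (simp add: sum.If_cases)
          finally show ?thesis .
        qed
        have "sum f T \<le> sum f S"
        proof (rule topk_sum)
          show "card T \<le> card S" using cw cS unfolding cardv_def T_def by simp
          show "f t \<le> f s" if "s \<in> S" "t \<notin> S" for s t
            using top[OF that] unfolding f_def by (intro power_mono) auto
        qed (auto simp: f0)
        then have "(norm p)^2 \<le> (norm g)^2" using pp gg by (simp add: power2_norm_eq_inner)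
        then show ?thesis by (simp add: power2_le_iff_abs_le)
      qed
      finally show ?thesis .
    qed
    then show ?thesis using feas qu by auto
  qed
  have eq: "modularity A (V(i := w)) = modularity A (V(i := 0)) + 2 * (q \<bullet> w)
     + (1 / (2 * total_weight A)) * (A i i - degree A i * degree A i / (2 * total_weight A))"
    if "feasible k w" for w
  proof -
    have "w \<bullet> w = 1" using that unfolding feasible_def by (simp add: norm_eq_1)
    then show ?thesis using modularity_decomp[OF symm, where V=V and i=i and w=w] unfolding q_def by simp
  qed
  show ?thesis
    using main eq[of u] eq unfolding u_def[symmetric] by auto
qed

end
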